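(* Let $(X,Y,\phi)$ be an $L$-context and let $X'\subseteq X$, $Y'\subseteq Y$. Then: (1) $\mathcal{K}\phi_{X,Y'}\subseteq\mathcal{K}\phi$ (so that the map $\mathcal{K}\phi\to\mathcal{K}\phi_{X,Y'}$, $\mu\mapsto(\phi_{X,Y'})^\forall(\phi_{X,Y'})^\exists\mu$, has the inclusion $\mathcal{K}\phi_{X,Y'}\hookrightarrow\mathcal{K}\phi$ as its right adjoint). (2) For every $\mu\in\mathcal{K}\phi$ one has $\mu_{X'}\in\mathcal{K}\phi_{X',Y}$; the map $\mathcal{K}\phi_{X',Y}\to\mathcal{K}\phi$, $\mu'\mapsto\phi^\forall\phi^\exists\underline{\mu'}$, is $L$-isometric, i.e. $L^{X'}(\mu',\mu'')=L^X(\phi^\forall\phi^\exists\underline{\mu'},\phi^\forall\phi^\exists\underline{\mu''})$ for all $\mu',\mu''\in\mathcal{K}\phi_{X',Y}$; and its right adjoint is the restriction map $\mathcal{K}\phi\to\mathcal{K}\phi_{X',Y}$, $\mu\mapsto\mu_{X'}$.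
   Context: $L=(L,* )$ is a complete residuated lattice: a complete lattice with bottom $0$ and top $1$, equipped with a commutative associative operation $*$ with unit $1$ satisfying $a*\bigvee_i b_i=\bigvee_i a*b_i$; $\to$ is its residuum ($a*b\le c\iff a\le b\to c$). An $L$-context is a triple $(X,Y,\phi)$ with $X,Y$ sets and $\phi\colon X\times Y\to L$. $L^X$ denotes the set of maps $X\to L$, carrying the $L$-valued order $L^X(\mu,\mu')=\bigwedge_{x\in X}(\mu(x)\to\mu'(x))$. Define $\phi^\exists\colon L^X\to L^Y$, $(\phi^\exists\mu)(y)=\bigvee_{x\in X}\mu(x)*\phi(x,y)$, and $\phi^\forall\colon L^Y\to L^X$, $(\phi^\forall\lambda)(x)=\bigwedge_{y\in Y}(\phi(x,y)\to\lambda(y))$. The property oriented concept $L$-lattice is $\mathcal{K}\phi=\{\mu\in L^X\mid \phi^\forall\phi^\exists\mu=\mu\}$ with the $L$-order inherited from $L^X$. For $X'\subseteq X$, $Y'\subseteq Y$, $\phi_{X',Y'}$ denotes the restriction of $\phi$ to $X'\times Y'$; for $\mu\in L^X$, $\mu_{X'}$ is its restriction to $X'$; for $\mu'\in L^{X'}$, $\underline{\mu'}\in L^X$ is its extension by $0$ (equal to $\mu'(x)$ for $x\in X'$ and $0$ otherwise). A map $f$ between $L$-ordered sets $P,Q$ is $L$-isometric if $P(p,p')=Q(fp,fp')$; monotone maps $f\colon P\to Q$, $g\colon Q\to P$ are adjoint ($f\dashv g$) if $Q(fp,q)=P(p,gq)$ for all $p,q$. *)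

theory Defs
  imports Main
begin

definition complete_residuated_lattice ::
  "('l::complete_lattice \<Rightarrow> 'l \<Rightarrow> 'l) \<Rightarrow> ('l \<Rightarrow> 'l \<Rightarrow> 'l) \<Rightarrow> bool" where
  "complete_residuated_lattice mult imp \<longleftrightarrow>
     (\<forall>a b. mult a b = mult b a) \<and>
     (\<forall>a b c. mult (mult a b) c = mult a (mult b c)) \<and>
     (\<forall>a. mult a top = a) \<and>
     (\<forall>a B. mult a (Sup B) = Sup (mult a ` B)) \<and>
     (\<forall>a b c. mult a b \<le> c \<longleftrightarrow> a \<le> imp b c)"

text \<open>Elements of L^X are represented as maps 'a => 'l that are bot outside X.\<close>
definition Lmaps :: "'a set \<Rightarrow> ('a \<Rightarrow> 'l::complete_lattice) set" where
  "Lmaps X = {\<mu>. \<forall>x. x \<notin> X \<longrightarrow> \<mu> x = bot}"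

definition Lord :: "('l::complete_lattice \<Rightarrow> 'l \<Rightarrow> 'l) \<Rightarrow> 'a set \<Rightarrow> ('a \<Rightarrow> 'l) \<Rightarrow> ('a \<Rightarrow> 'l) \<Rightarrow> 'l" where
  "Lord imp X \<mu> \<mu>' = (INF x\<in>X. imp (\<mu> x) (\<mu>' x))"

definition phi_ex :: "('l::complete_lattice \<Rightarrow> 'l \<Rightarrow> 'l) \<Rightarrow> 'a set \<Rightarrow> 'b set \<Rightarrow>
    ('a \<Rightarrow> 'b \<Rightarrow> 'l) \<Rightarrow> ('a \<Rightarrow> 'l) \<Rightarrow> ('b \<Rightarrow> 'l)" where
  "phi_ex mult X Y \<phi> \<mu> = (\<lambda>y. if y \<in> Y then (SUP x\<in>X. mult (\<mu> x) (\<phi> x y)) else bot)"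

definition phi_all :: "('l::complete_lattice \<Rightarrow> 'l \<Rightarrow> 'l) \<Rightarrow> 'a set \<Rightarrow> 'b set \<Rightarrow>
    ('a \<Rightarrow> 'b \<Rightarrow> 'l) \<Rightarrow> ('b \<Rightarrow> 'l) \<Rightarrow> ('a \<Rightarrow> 'l)" where
  "phi_all imp X Y \<phi> lam = (\<lambda>x. if x \<in> X then (INF y\<in>Y. imp (\<phi> x y) (lam y)) else bot)"

definition clos where
  "clos mult imp X Y \<phi> \<mu> = phi_all imp X Y \<phi> (phi_ex mult X Y \<phi> \<mu>)"

text \<open>The property oriented concept L-lattice K phi_{X,Y} (as a set of elements of L^X).
  The restriction phi_{X',Y'} of phi is represented by using the same phi with carriers X', Y'.\<close>
definition Kphi where
  "Kphi mult imp X Y \<phi> = {\<mu> \<in> Lmaps X. clos mult imp X Y \<phi> \<mu> = \<mu>}"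

definition restr :: "'a set \<Rightarrow> ('a \<Rightarrow> 'l::complete_lattice) \<Rightarrow> ('a \<Rightarrow> 'l)" where
  "restr X' \<mu> = (\<lambda>x. if x \<in> X' then \<mu> x else bot)"

definition ext0 :: "'a set \<Rightarrow> ('a \<Rightarrow> 'l::complete_lattice) \<Rightarrow> ('a \<Rightarrow> 'l)" where
  "ext0 X' \<mu>' = (\<lambda>x. if x \<in> X' then \<mu>' x else bot)"

end

theory Submission
  imports Defs
begin

locale crl =
  fixes mult imp :: "'l::complete_lattice \<Rightarrow> 'l \<Rightarrow> 'l"
  assumes comm: "mult a b = mult b a"
    and assoc: "mult (mult a b) c = mult a (mult b c)"
    and distr: "mult a (Sup B) = Sup (mult a ` B)"
    and resid: "mult a b \<le> c \<longleftrightarrow> a \<le> imp b c"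
begin

lemma mono_r: "b \<le> c \<Longrightarrow> mult a b \<le> mult a c"
proof -
  assume bc: "b \<le> c"
  have "mult c a \<le> mult a c" by (simp add: comm)
  hence "c \<le> imp a (mult a c)" by (simp add: resid)
  hence "b \<le> imp a (mult a c)" using bc by (metis order_trans)
  hence "mult b a \<le> mult a c" by (simp add: resid)
  thus ?thesis by (simp add: comm)
qed

lemma mono_l: "b \<le> c \<Longrightarrow> mult b a \<le> mult c a"
  using mono_r comm by metis

lemma mult_bot: "mult a bot = bot"
  using distr[of a "{}"] by simp

lemma mult_bot_l: "mult bot a = bot"
  using mult_bot comm by metis

lemma imp_bot: "imp bot c = top"
  using resid[of top bot c] mult_bot by (simp add: top_unique)

lemma Lord_ge: "a \<le> Lord imp X \<mu> \<nu> \<longleftrightarrow> (\<forall>x\<in>X. mult a (\<mu> x) \<le> \<nu> x)"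
  unfolding Lord_def by (simp add: le_INF_iff resid)

lemma Lord_mult: "x \<in> X \<Longrightarrow> mult (Lord imp X \<mu> \<nu>) (\<mu> x) \<le> \<nu> x"
  using Lord_ge[of "Lord imp X \<mu> \<nu>" X \<mu> \<nu>] by simp

lemma extensive: "x \<in> X \<Longrightarrow> \<mu> x \<le> clos mult imp X Y \<phi> \<mu> x"
  unfolding clos_def phi_all_def phi_ex_def
  by (auto simp: le_INF_iff resid[symmetric] intro: SUP_upper)

lemma counit: "y \<in> Y \<Longrightarrow> phi_ex mult X Y \<phi> (phi_all imp X Y \<phi> lam) y \<le> lam y"
proof -
  assume y: "y \<in> Y"
  have "\<And>x. x \<in> X \<Longrightarrow> mult (phi_all imp X Y \<phi> lam x) (\<phi> x y) \<le> lam y"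
  proof -
    fix x assume "x \<in> X"
    hence "phi_all imp X Y \<phi> lam x \<le> imp (\<phi> x y) (lam y)"
      using y INF_lower[of y Y "\<lambda>y. imp (\<phi> x y) (lam y)"] by (simp add: phi_all_def)
    thus "mult (phi_all imp X Y \<phi> lam x) (\<phi> x y) \<le> lam y" by (simp add: resid)
  qed
  thus ?thesis using y unfolding phi_ex_def by (simp add: SUP_least)
qed

lemma ex_mono: "(\<And>x. x \<in> X \<Longrightarrow> \<mu> x \<le> \<mu>' x) \<Longrightarrow> phi_ex mult X Y \<phi> \<mu> y \<le> phi_ex mult X Y \<phi> \<mu>' y"
  unfolding phi_ex_def by (auto intro!: SUP_mono mono_l)

lemma ex_clos: "phi_ex mult X Y \<phi> (clos mult imp X Y \<phi> \<mu>) = phi_ex mult X Y \<phi> \<mu>"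
proof
  fix y
  show "phi_ex mult X Y \<phi> (clos mult imp X Y \<phi> \<mu>) y = phi_ex mult X Y \<phi> \<mu> y"
  proof (cases "y \<in> Y")
    case True
    have "phi_ex mult X Y \<phi> (clos mult imp X Y \<phi> \<mu>) y \<le> phi_ex mult X Y \<phi> \<mu> y"
      unfolding clos_def using counit[OF True] .
    moreover have "phi_ex mult X Y \<phi> \<mu> y \<le> phi_ex mult X Y \<phi> (clos mult imp X Y \<phi> \<mu>) y"
      by (rule ex_mono) (rule extensive)
    ultimately show ?thesis by (rule antisym)
  next
    case False thus ?thesis by (simp add: phi_ex_def)
  qed
qed

lemma idem: "clos mult imp X Y \<phi> (clos mult imp X Y \<phi> \<mu>) = clos mult imp X Y \<phi> \<mu>"
  using ex_clos by (metis clos_def)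

lemma clos_Lmaps: "clos mult imp X Y \<phi> \<mu> \<in> Lmaps X"
  unfolding Lmaps_def clos_def phi_all_def by simp

lemma clos_K: "clos mult imp X Y \<phi> \<mu> \<in> Kphi mult imp X Y \<phi>"
  unfolding Kphi_def using clos_Lmaps[of X Y \<phi> \<mu>] idem[of X Y \<phi> \<mu>] by blast

lemma Lord_clos: "Lord imp X \<mu> \<mu>' \<le> Lord imp X (clos mult imp X Y \<phi> \<mu>) (clos mult imp X Y \<phi> \<mu>')"
proof -
  define a where "a = Lord imp X \<mu> \<mu>'"
  have A: "\<And>x. x \<in> X \<Longrightarrow> mult a (\<mu> x) \<le> \<mu>' x" unfolding a_def by (rule Lord_mult)
  have E: "mult a (phi_ex mult X Y \<phi> \<mu> y) \<le> phi_ex mult X Y \<phi> \<mu>' y" if "y \<in> Y" for y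
  proof -
    have "mult a (phi_ex mult X Y \<phi> \<mu> y) = (SUP x\<in>X. mult a (mult (\<mu> x) (\<phi> x y)))"
      using that by (simp add: phi_ex_def distr image_image)
    also have "\<dots> \<le> phi_ex mult X Y \<phi> \<mu>' y"
      using that A by (auto simp: phi_ex_def assoc[symmetric] intro!: SUP_mono mono_l)
    finally show ?thesis .
  qed
  have "\<forall>x\<in>X. mult a (clos mult imp X Y \<phi> \<mu> x) \<le> clos mult imp X Y \<phi> \<mu>' x"
  proof
    fix x assume x: "x \<in> X"
    show "mult a (clos mult imp X Y \<phi> \<mu> x) \<le> clos mult imp X Y \<phi> \<mu>' x"
      unfolding clos_def phi_all_def using x
    proof (simp add: le_INF_iff resid[symmetric], intro ballI)
      fix y assume y: "y \<in> Y"
      have "mult (mult a (INF y\<in>Y. imp (\<phi> x y) (phi_ex mult X Y \<phi> \<mu> y))) (\<phi> x y)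
          = mult a (mult (INF y\<in>Y. imp (\<phi> x y) (phi_ex mult X Y \<phi> \<mu> y)) (\<phi> x y))"
        by (rule assoc)
      also have "\<dots> \<le> mult a (phi_ex mult X Y \<phi> \<mu> y)"
        by (rule mono_r) (simp add: resid y INF_lower[of y Y "\<lambda>y. imp (\<phi> x y) (phi_ex mult X Y \<phi> \<mu> y)", simplified])
      also have "\<dots> \<le> phi_ex mult X Y \<phi> \<mu>' y" using E y .
      finally show "mult (mult a (INF y\<in>Y. imp (\<phi> x y) (phi_ex mult X Y \<phi> \<mu> y))) (\<phi> x y)
          \<le> phi_ex mult X Y \<phi> \<mu>' y" .
    qed
  qed
  thus ?thesis unfolding a_def[symmetric] by (simp add: Lord_ge)
qed

lemma Lord_anti1: "(\<And>x. x \<in> X \<Longrightarrow> \<mu> x \<le> \<mu>2 x) \<Longrightarrow> Lord imp X \<mu>2 \<nu> \<le> Lord imp X \<mu> \<nu>"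
proof -
  assume h: "\<And>x. x \<in> X \<Longrightarrow> \<mu> x \<le> \<mu>2 x"
  have "\<forall>x\<in>X. mult (Lord imp X \<mu>2 \<nu>) (\<mu> x) \<le> \<nu> x"
    using h Lord_mult mono_r order_trans by metis
  thus ?thesis by (simp add: Lord_ge)
qed

lemma Lord_cong: "(\<And>x. x \<in> X \<Longrightarrow> \<mu> x = \<mu>2 x) \<Longrightarrow> (\<And>x. x \<in> X \<Longrightarrow> \<nu> x = \<nu>2 x)
   \<Longrightarrow> Lord imp X \<mu> \<nu> = Lord imp X \<mu>2 \<nu>2"
  unfolding Lord_def by (rule INF_cong) auto

lemma Lord_sub: "X' \<subseteq> X \<Longrightarrow> Lord imp X \<mu> \<nu> \<le> Lord imp X' \<mu> \<nu>"
  unfolding Lord_def by (rule INF_superset_mono) auto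

lemma eq_by_lower: "(\<And>a. a \<le> p \<longleftrightarrow> a \<le> (q::'l)) \<Longrightarrow> p = q"
  by (metis order_refl antisym)

lemma Lord_ext: "X' \<subseteq> X \<Longrightarrow> Lord imp X (ext0 X' \<mu>') \<nu> = Lord imp X' \<mu>' \<nu>"
  apply (rule eq_by_lower)
  apply (simp add: Lord_ge ext0_def mult_bot)
  by auto

lemma ex_ext: "X' \<subseteq> X \<Longrightarrow> phi_ex mult X Y \<phi> (ext0 X' \<mu>') = phi_ex mult X' Y \<phi> \<mu>'"
proof
  fix y assume XX: "X' \<subseteq> X"
  show "phi_ex mult X Y \<phi> (ext0 X' \<mu>') y = phi_ex mult X' Y \<phi> \<mu>' y"
  proof (cases "y \<in> Y")
    case True
    have "(SUP x\<in>X. mult (ext0 X' \<mu>' x) (\<phi> x y)) \<le> (SUP x\<in>X'. mult (\<mu>' x) (\<phi> x y))"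
    proof (rule SUP_least)
      fix x assume "x \<in> X"
      show "mult (ext0 X' \<mu>' x) (\<phi> x y) \<le> (SUP x\<in>X'. mult (\<mu>' x) (\<phi> x y))"
        by (cases "x \<in> X'") (auto simp: ext0_def mult_bot_l intro: SUP_upper)
    qed
    moreover have "(SUP x\<in>X'. mult (\<mu>' x) (\<phi> x y)) \<le> (SUP x\<in>X. mult (ext0 X' \<mu>' x) (\<phi> x y))"
    proof (rule SUP_least)
      fix x assume "x \<in> X'"
      thus "mult (\<mu>' x) (\<phi> x y) \<le> (SUP x\<in>X. mult (ext0 X' \<mu>' x) (\<phi> x y))"
        using XX SUP_upper[of x X "\<lambda>x. mult (ext0 X' \<mu>' x) (\<phi> x y)"] by (auto simp: ext0_def)
    qed
    ultimately show ?thesis using True by (simp add: phi_ex_def antisym)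
  next
    case False thus ?thesis by (simp add: phi_ex_def)
  qed
qed

lemma clos_ext_pt: "X' \<subseteq> X \<Longrightarrow> x \<in> X' \<Longrightarrow> clos mult imp X Y \<phi> (ext0 X' \<mu>') x = clos mult imp X' Y \<phi> \<mu>' x"
  unfolding clos_def by (simp add: ex_ext phi_all_def subsetD)

lemma K_sub: assumes YY: "Y' \<subseteq> Y" and m: "\<mu> \<in> Kphi mult imp X Y' \<phi>"
  shows "\<mu> \<in> Kphi mult imp X Y \<phi>"
proof -
  have L: "\<mu> \<in> Lmaps X" and F: "clos mult imp X Y' \<phi> \<mu> = \<mu>" using m by (auto simp: Kphi_def)
  have "clos mult imp X Y \<phi> \<mu> x = \<mu> x" for x
  proof (cases "x \<in> X")
    case True
    have "clos mult imp X Y \<phi> \<mu> x \<le> clos mult imp X Y' \<phi> \<mu> x"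
      using True YY unfolding clos_def phi_all_def phi_ex_def
      by (auto intro!: INF_superset_mono)
    hence "clos mult imp X Y \<phi> \<mu> x \<le> \<mu> x" using F by simp
    thus ?thesis using extensive[OF True] by (rule antisym)
  next
    case False thus ?thesis using L by (simp add: clos_def phi_all_def Lmaps_def)
  qed
  thus ?thesis using L by (auto simp: Kphi_def)
qed

lemma restr_K: assumes XX: "X' \<subseteq> X" and m: "\<mu> \<in> Kphi mult imp X Y \<phi>"
  shows "restr X' \<mu> \<in> Kphi mult imp X' Y \<phi>"
proof -
  have L: "\<mu> \<in> Lmaps X" and F: "clos mult imp X Y \<phi> \<mu> = \<mu>" using m by (auto simp: Kphi_def)
  have "clos mult imp X' Y \<phi> (restr X' \<mu>) x = restr X' \<mu> x" for x
  proof (cases "x \<in> X'")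
    case True
    have "clos mult imp X' Y \<phi> (restr X' \<mu>) x \<le> clos mult imp X Y \<phi> \<mu> x"
      using True XX unfolding clos_def phi_all_def
    proof (simp add: subsetD, intro INF_mono bexI)
      fix y assume "y \<in> Y"
      have "phi_ex mult X' Y \<phi> (restr X' \<mu>) y \<le> phi_ex mult X Y \<phi> \<mu> y"
        unfolding phi_ex_def using XX by (auto simp: restr_def intro!: SUP_mono)
      thus "imp (\<phi> x y) (phi_ex mult X' Y \<phi> (restr X' \<mu>) y) \<le> imp (\<phi> x y) (phi_ex mult X Y \<phi> \<mu> y)"
        by (metis resid order_refl order_trans)
    qed
    hence "clos mult imp X' Y \<phi> (restr X' \<mu>) x \<le> restr X' \<mu> x" using F True by (simp add: restr_def)
    thus ?thesis using extensive[OF True] by (rule antisym)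
  next
    case False thus ?thesis by (simp add: clos_def phi_all_def restr_def)
  qed
  thus ?thesis by (auto simp: Kphi_def Lmaps_def restr_def)
qed

end

lemma crl_of: "complete_residuated_lattice mult imp \<Longrightarrow> crl mult imp"
  unfolding complete_residuated_lattice_def crl_def by blast

theorem mainTheorem1:
  fixes mult imp :: "'l::complete_lattice \<Rightarrow> 'l \<Rightarrow> 'l"
    and X X' :: "'a set" and Y Y' :: "'b set" and \<phi> :: "'a \<Rightarrow> 'b \<Rightarrow> 'l"
  assumes L: "complete_residuated_lattice mult imp"
    and XX: "X' \<subseteq> X" and YY: "Y' \<subseteq> Y"
  shows
    \<comment> \<open>(1)\<close>
    "Kphi mult imp X Y' \<phi> \<subseteq> Kphi mult imp X Y \<phi>
     \<and> (\<forall>\<mu>\<in>Kphi mult imp X Y \<phi>. clos mult imp X Y' \<phi> \<mu> \<in> Kphi mult imp X Y' \<phi>)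
     \<and> (\<forall>\<mu>\<in>Kphi mult imp X Y \<phi>. \<forall>\<mu>'\<in>Kphi mult imp X Y \<phi>.
          Lord imp X \<mu> \<mu>' \<le> Lord imp X (clos mult imp X Y' \<phi> \<mu>) (clos mult imp X Y' \<phi> \<mu>'))
     \<and> (\<forall>\<mu>\<in>Kphi mult imp X Y \<phi>. \<forall>\<nu>\<in>Kphi mult imp X Y' \<phi>.
          Lord imp X (clos mult imp X Y' \<phi> \<mu>) \<nu> = Lord imp X \<mu> \<nu>)
     \<and>
    \<comment> \<open>(2)\<close>
     (\<forall>\<mu>\<in>Kphi mult imp X Y \<phi>. restr X' \<mu> \<in> Kphi mult imp X' Y \<phi>)
     \<and> (\<forall>\<mu>'\<in>Kphi mult imp X' Y \<phi>. clos mult imp X Y \<phi> (ext0 X' \<mu>') \<in> Kphi mult imp X Y \<phi>)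
     \<and> (\<forall>\<mu>'\<in>Kphi mult imp X' Y \<phi>. \<forall>\<mu>''\<in>Kphi mult imp X' Y \<phi>.
          Lord imp X' \<mu>' \<mu>'' =
          Lord imp X (clos mult imp X Y \<phi> (ext0 X' \<mu>')) (clos mult imp X Y \<phi> (ext0 X' \<mu>'')))
     \<and> (\<forall>\<mu>\<in>Kphi mult imp X Y \<phi>. \<forall>\<mu>'\<in>Kphi mult imp X Y \<phi>.
          Lord imp X \<mu> \<mu>' \<le> Lord imp X' (restr X' \<mu>) (restr X' \<mu>'))
     \<and> (\<forall>\<mu>'\<in>Kphi mult imp X' Y \<phi>. \<forall>\<mu>\<in>Kphi mult imp X Y \<phi>.
          Lord imp X (clos mult imp X Y \<phi> (ext0 X' \<mu>')) \<mu> = Lord imp X' \<mu>' (restr X' \<mu>))"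
proof -
  interpret crl mult imp using crl_of[OF L] .
  have P1: "Kphi mult imp X Y' \<phi> \<subseteq> Kphi mult imp X Y \<phi>" using K_sub[OF YY] by blast
  have P4: "Lord imp X (clos mult imp X Y' \<phi> \<mu>) \<nu> = Lord imp X \<mu> \<nu>"
    if "\<nu> \<in> Kphi mult imp X Y' \<phi>" for \<mu> \<nu>
  proof (rule antisym)
    show "Lord imp X (clos mult imp X Y' \<phi> \<mu>) \<nu> \<le> Lord imp X \<mu> \<nu>"
      by (rule Lord_anti1) (rule extensive)
    have "clos mult imp X Y' \<phi> \<nu> = \<nu>" using that by (simp add: Kphi_def)
    thus "Lord imp X \<mu> \<nu> \<le> Lord imp X (clos mult imp X Y' \<phi> \<mu>) \<nu>"
      using Lord_clos[of X \<mu> \<nu> Y' \<phi>] by simp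
  qed
  have RE: "\<And>\<mu>' x. \<mu>' \<in> Kphi mult imp X' Y \<phi> \<Longrightarrow> x \<in> X' \<Longrightarrow> clos mult imp X Y \<phi> (ext0 X' \<mu>') x = \<mu>' x"
  proof -
    fix \<mu>' x assume a: "\<mu>' \<in> Kphi mult imp X' Y \<phi>" and x: "x \<in> X'"
    have "clos mult imp X' Y \<phi> \<mu>' = \<mu>'" using a by (simp add: Kphi_def)
    thus "clos mult imp X Y \<phi> (ext0 X' \<mu>') x = \<mu>' x" using clos_ext_pt[OF XX x, of Y \<phi> \<mu>'] by simp
  qed
  have P7: "Lord imp X' \<mu>' \<mu>'' =
          Lord imp X (clos mult imp X Y \<phi> (ext0 X' \<mu>')) (clos mult imp X Y \<phi> (ext0 X' \<mu>''))"
    if a: "\<mu>' \<in> Kphi mult imp X' Y \<phi>" and b: "\<mu>'' \<in> Kphi mult imp X' Y \<phi>" for \<mu>' \<mu>''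
  proof (rule antisym)
    have "Lord imp X' \<mu>' \<mu>'' = Lord imp X (ext0 X' \<mu>') (ext0 X' \<mu>'')"
      using Lord_ext[OF XX, of \<mu>' "ext0 X' \<mu>''"] by (auto simp: ext0_def intro: Lord_cong)
    thus "Lord imp X' \<mu>' \<mu>'' \<le> Lord imp X (clos mult imp X Y \<phi> (ext0 X' \<mu>')) (clos mult imp X Y \<phi> (ext0 X' \<mu>''))"
      using Lord_clos by simp
    have "Lord imp X (clos mult imp X Y \<phi> (ext0 X' \<mu>')) (clos mult imp X Y \<phi> (ext0 X' \<mu>''))
       \<le> Lord imp X' (clos mult imp X Y \<phi> (ext0 X' \<mu>')) (clos mult imp X Y \<phi> (ext0 X' \<mu>''))"
      by (rule Lord_sub[OF XX])
    also have "\<dots> = Lord imp X' \<mu>' \<mu>''" by (rule Lord_cong) (auto simp: RE a b)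
    finally show "Lord imp X (clos mult imp X Y \<phi> (ext0 X' \<mu>')) (clos mult imp X Y \<phi> (ext0 X' \<mu>'')) \<le> Lord imp X' \<mu>' \<mu>''" .
  qed
  have P8: "Lord imp X \<mu> \<mu>' \<le> Lord imp X' (restr X' \<mu>) (restr X' \<mu>')" for \<mu> \<mu>'
  proof -
    have "Lord imp X \<mu> \<mu>' \<le> Lord imp X' \<mu> \<mu>'" by (rule Lord_sub[OF XX])
    also have "\<dots> = Lord imp X' (restr X' \<mu>) (restr X' \<mu>')" by (rule Lord_cong) (auto simp: restr_def)
    finally show ?thesis .
  qed
  have P9: "Lord imp X (clos mult imp X Y \<phi> (ext0 X' \<mu>')) \<mu> = Lord imp X' \<mu>' (restr X' \<mu>)"
    if a: "\<mu>' \<in> Kphi mult imp X' Y \<phi>" and b: "\<mu> \<in> Kphi mult imp X Y \<phi>" for \<mu>' \<mu>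
  proof (rule antisym)
    have "Lord imp X (clos mult imp X Y \<phi> (ext0 X' \<mu>')) \<mu> \<le> Lord imp X' (clos mult imp X Y \<phi> (ext0 X' \<mu>')) \<mu>"
      by (rule Lord_sub[OF XX])
    also have "\<dots> = Lord imp X' \<mu>' (restr X' \<mu>)" by (rule Lord_cong) (auto simp: RE a restr_def)
    finally show "Lord imp X (clos mult imp X Y \<phi> (ext0 X' \<mu>')) \<mu> \<le> Lord imp X' \<mu>' (restr X' \<mu>)" .
    have "Lord imp X' \<mu>' (restr X' \<mu>) = Lord imp X' \<mu>' \<mu>" by (rule Lord_cong) (auto simp: restr_def)
    also have "\<dots> = Lord imp X (ext0 X' \<mu>') \<mu>" using Lord_ext[OF XX] by simp
    also have "\<dots> \<le> Lord imp X (clos mult imp X Y \<phi> (ext0 X' \<mu>')) (clos mult imp X Y \<phi> \<mu>)" by (rule Lord_clos)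
    also have "\<dots> = Lord imp X (clos mult imp X Y \<phi> (ext0 X' \<mu>')) \<mu>" using b by (simp add: Kphi_def)
    finally show "Lord imp X' \<mu>' (restr X' \<mu>) \<le> Lord imp X (clos mult imp X Y \<phi> (ext0 X' \<mu>')) \<mu>" .
  qed
  show ?thesis
    apply (intro conjI ballI)
    apply (rule P1)
    apply (rule clos_K)
    apply (rule Lord_clos)
    apply (erule P4)
    apply (erule restr_K[OF XX])
    apply (rule clos_K)
    apply (erule (1) P7)
    apply (rule P8)
    apply (erule (1) P9)
    done
qed

end
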